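(* Let $\alpha$ be a unit-speed curve in $\mathbb{R}^3$ with nonvanishing curvature, let $\alpha_T$ be its tangent indicatrix with arc length $s_T$ and Frenet apparatus $\{T_T,N_T,B_T,\kappa_T,\tau_T\}$, and let $\beta$ be an evolute-direction curve of $\alpha_T$ (an $X$-direction curve of $\alpha_T$ with $N_\beta=T_T$). Then there is an antiderivative $\varphi=\int\tau_T\,ds_T$ of $\tau_T$ with respect to $s_T$ such that $$\frac{\tau_\beta}{\kappa_\beta}=-\cot\varphi.$$ Moreover, $$\frac{\tau_T}{\kappa_T}=\frac{\kappa_\beta^2}{(\kappa_\beta^2+\tau_\beta^2)^{3/2}}\,\frac{d}{ds_T}\Big(\frac{\tau_\beta}{\kappa_\beta}\Big).$$
   Context: Let $\alpha:I\subset\mathbb{R}\to\mathbb{R}^3$ be a unit-speed curve with curvature $\kappa>0$, torsion $\tau$ and Frenet frame $\{T,N,B\}$. The tangent indicatrix of $\alpha$ is the curve $\alpha_T=T$ on the unit sphere. Its arc length is $s_T=\int\kappa\,ds$. Its Frenet apparatus is $\{T_T,N_T,B_T,\kappa_T,\tau_T\}$, with $\frac{dT_T}{ds_T}=\kappa_TN_T$, $\frac{dN_T}{ds_T}=-\kappa_TT_T+\tau_TB_T$ and $\frac{dB_T}{ds_T}=-\tau_TN_T$. Let $x,y,z$ be real functions of $s_T$ with $x^2+y^2+z^2=1$, and set $X=xT_T+yN_T+zB_T$. An integral curve $\beta$ of $X$, meaning $d\beta/ds_T=X$, is an $X$-direction curve of $\alpha_T$. It has unit speed with arc length $s_T$.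 It is regarded as a Frenet curve with frame $\{T_\beta=X,N_\beta,B_\beta\}$, curvature $\kappa_\beta>0$ and torsion $\tau_\beta$, with derivatives taken with respect to $s_T$. $\beta$ is an evolute-direction curve of $\alpha_T$ if $N_\beta=T_T$. *)

theory Defs
  imports "HOL-Analysis.Analysis"
begin

definition frenet_apparatus ::
  "real set \<Rightarrow> (real \<Rightarrow> real^3) \<Rightarrow> (real \<Rightarrow> real^3) \<Rightarrow> (real \<Rightarrow> real^3) \<Rightarrow>
   (real \<Rightarrow> real^3) \<Rightarrow> (real \<Rightarrow> real) \<Rightarrow> (real \<Rightarrow> real) \<Rightarrow> bool" where
  "frenet_apparatus J c T N B k t \<longleftrightarrow>
     (\<forall>s\<in>J. (c has_vector_derivative T s) (at s)
        \<and> norm (T s) = 1 \<and> norm (N s) = 1 \<and> T s \<bullet> N s = 0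
        \<and> B s = cross3 (T s) (N s)
        \<and> k s > 0
        \<and> (T has_vector_derivative (k s *\<^sub>R N s)) (at s)
        \<and> (N has_vector_derivative (- (k s *\<^sub>R T s) + t s *\<^sub>R B s)) (at s)
        \<and> (B has_vector_derivative (- (t s *\<^sub>R N s))) (at s))"

end

theory Submission
  imports Defs
begin

lemma inner_vd:
  fixes f g :: "real \<Rightarrow> 'a::real_inner"
  assumes "(f has_vector_derivative f') (at u)" "(g has_vector_derivative g') (at u)"
  shows "((\<lambda>v. f v \<bullet> g v) has_real_derivative (f' \<bullet> g u + f u \<bullet> g')) (at u)"
proof -
  have "((\<lambda>v. f v \<bullet> g v) has_derivative (\<lambda>h. f u \<bullet> (h *\<^sub>R g') + (h *\<^sub>R f') \<bullet> g u)) (at u)"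
    using has_derivative_inner[OF assms[unfolded has_vector_derivative_def]] .
  then show ?thesis unfolding has_field_derivative_def
    by (rule has_derivative_eq_rhs) (auto simp: fun_eq_iff algebra_simps)
qed

lemma triple: "cross3 (a::real^3) b \<bullet> c = a \<bullet> cross3 b c"
  unfolding cross3_def inner_vec_def sum_3 by (simp add: algebra_simps)

lemma open_image_pos:
  fixes f d :: "real \<Rightarrow> real"
  assumes I: "is_interval I" "open I" and der: "\<forall>s\<in>I. (f has_real_derivative d s) (at s) \<and> d s > 0"
  shows "open (f ` I)"
  unfolding open_dist
proof
  fix u assume "u \<in> f ` I"
  then obtain s where s: "s \<in> I" "u = f s" by auto
  obtain e where e: "e > 0" "ball s e \<subseteq> I" using I(2) s(1) open_contains_ball by blast
  obtain d1 where d1: "d1 > 0" "\<forall>h>0. h < d1 \<longrightarrow> f s < f (s + h)"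
    using DERIV_pos_inc_right der s(1) by blast
  obtain d2 where d2: "d2 > 0" "\<forall>h>0. h < d2 \<longrightarrow> f (s - h) < f s"
    using DERIV_pos_inc_left der s(1) by blast
  define h where "h = min e (min d1 d2) / 2"
  have h: "h > 0" "h < e" "h < d1" "h < d2" using e d1 d2 by (auto simp: h_def)
  define a b where "a = s - h" and "b = s + h"
  have ab: "a \<in> I" "b \<in> I" using e h by (auto simp: a_def b_def dist_real_def subset_iff)
  have fab: "f a < f s" "f s < f b" using d1 d2 h by (auto simp: a_def b_def)
  have sub: "{a..b} \<subseteq> I" using I(1) ab unfolding is_interval_1 by (meson atLeastAtMost_iff subsetI)
  have cont: "continuous_on {a..b} f"
  proof (rule continuous_at_imp_continuous_on, rule ballI)
    fix t assume "t \<in> {a..b}"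
    then have "t \<in> I" using sub by blast
    then show "isCont f t" using der DERIV_isCont by blast
  qed
  show "\<exists>r>0. \<forall>v. dist v u < r \<longrightarrow> v \<in> f ` I"
  proof (intro exI[of _ "min (f s - f a) (f b - f s)"] conjI allI impI)
    show "0 < min (f s - f a) (f b - f s)" using fab by simp
    fix v assume "dist v u < min (f s - f a) (f b - f s)"
    then have "f a \<le> v" "v \<le> f b" using s by (auto simp: dist_real_def)
    then obtain t where "a \<le> t" "t \<le> b" "f t = v" using IVT'[OF _ _ _ cont] h
      by (auto simp: a_def b_def)
    then show "v \<in> f ` I" using sub by force
  qed
qed

theorem corollary4p4:
  fixes I :: "real set"
    and \<alpha> T N B :: "real \<Rightarrow> real^3" and \<kappa> \<tau> :: "real \<Rightarrow> real"
    and sT :: "real \<Rightarrow> real"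
    and \<alpha>T TT NT BT :: "real \<Rightarrow> real^3" and \<kappa>T \<tau>T :: "real \<Rightarrow> real"
    and x y z :: "real \<Rightarrow> real"
    and \<beta> N\<beta> B\<beta> :: "real \<Rightarrow> real^3" and \<kappa>\<beta> \<tau>\<beta> :: "real \<Rightarrow> real"
  assumes I: "is_interval I" "open I"
    and alpha: "frenet_apparatus I \<alpha> T N B \<kappa> \<tau>"
    and arclen: "\<forall>s\<in>I. (sT has_real_derivative \<kappa> s) (at s)"
    and indicatrix: "\<forall>s\<in>I. \<alpha>T (sT s) = T s"
    and alphaT: "frenet_apparatus (sT ` I) \<alpha>T TT NT BT \<kappa>T \<tau>T"
    and xyz: "\<forall>u\<in>sT ` I. (x u)\<^sup>2 + (y u)\<^sup>2 + (z u)\<^sup>2 = 1"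
    and beta: "frenet_apparatus (sT ` I) \<beta>
                 (\<lambda>u. x u *\<^sub>R TT u + y u *\<^sub>R NT u + z u *\<^sub>R BT u) N\<beta> B\<beta> \<kappa>\<beta> \<tau>\<beta>"
    and evolute: "\<forall>u\<in>sT ` I. N\<beta> u = TT u"
  shows "(\<exists>\<phi>. \<forall>u\<in>sT ` I. (\<phi> has_real_derivative \<tau>T u) (at u)
                         \<and> \<tau>\<beta> u / \<kappa>\<beta> u = - cot (\<phi> u))
      \<and> (\<forall>u\<in>sT ` I. \<exists>D. ((\<lambda>v. \<tau>\<beta> v / \<kappa>\<beta> v) has_real_derivative D) (at u)
                 \<and> \<tau>T u / \<kappa>T u
                     = (\<kappa>\<beta> u)\<^sup>2 / ((\<kappa>\<beta> u)\<^sup>2 + (\<tau>\<beta> u)\<^sup>2) powr (3/2) * D)"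
  proof -
  define J where "J = sT ` I"
  define X where "X = (\<lambda>u. x u *\<^sub>R TT u + y u *\<^sub>R NT u + z u *\<^sub>R BT u)"
  have Jopen: "open J" unfolding J_def
    using open_image_pos[OF I, of sT \<kappa>] alpha arclen unfolding frenet_apparatus_def by blast
  have A: "norm (TT u) = 1 \<and> norm (NT u) = 1 \<and> TT u \<bullet> NT u = 0 \<and> BT u = cross3 (TT u) (NT u)
     \<and> \<kappa>T u > 0 \<and> (TT has_vector_derivative (\<kappa>T u *\<^sub>R NT u)) (at u)
     \<and> (NT has_vector_derivative (- (\<kappa>T u *\<^sub>R TT u) + \<tau>T u *\<^sub>R BT u)) (at u)
     \<and> (BT has_vector_derivative (- (\<tau>T u *\<^sub>R NT u))) (at u)" if "u \<in> J" for u
    using alphaT that unfolding frenet_apparatus_def J_def by blast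
  have Bt: "norm (X u) = 1 \<and> norm (N\<beta> u) = 1 \<and> X u \<bullet> N\<beta> u = 0 \<and> B\<beta> u = cross3 (X u) (N\<beta> u)
     \<and> \<kappa>\<beta> u > 0 \<and> (X has_vector_derivative (\<kappa>\<beta> u *\<^sub>R N\<beta> u)) (at u)
     \<and> (B\<beta> has_vector_derivative (- (\<tau>\<beta> u *\<^sub>R N\<beta> u))) (at u)" if "u \<in> J" for u
    using beta that unfolding frenet_apparatus_def J_def X_def by blast
  have ev: "N\<beta> u = TT u" if "u \<in> J" for u using evolute that J_def by blast
  have key: "x u = 0 \<and> X u \<bullet> NT u = y u \<and> X u \<bullet> BT u = z u \<and> (y u)\<^sup>2 + (z u)\<^sup>2 = 1
     \<and> \<kappa>\<beta> u = - \<kappa>T u * y u \<and> \<tau>\<beta> u = \<kappa>T u * z u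
     \<and> ((\<lambda>v. X v \<bullet> BT v) has_real_derivative (- (\<tau>T u * y u))) (at u)
     \<and> ((\<lambda>v. X v \<bullet> NT v) has_real_derivative (\<tau>T u * z u)) (at u)" if u: "u \<in> J" for u
  proof -
    note a = A[OF u] and b = Bt[OF u] and e = ev[OF u]
    have TT1: "TT u \<bullet> TT u = 1" using a by (simp add: power2_norm_eq_inner[symmetric])
    have NT1: "NT u \<bullet> NT u = 1" using a by (simp add: power2_norm_eq_inner[symmetric])
    have "(norm (BT u))\<^sup>2 = 1" using norm_cross_dot[of "TT u" "NT u"] a by simp
    then have BT1: "BT u \<bullet> BT u = 1" by (simp add: power2_norm_eq_inner)
    have TB: "TT u \<bullet> BT u = 0" "NT u \<bullet> BT u = 0" using a dot_cross_self by metis+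
    have NT0: "TT u \<bullet> NT u = 0" using a by blast
    have XTT: "X u \<bullet> TT u = x u" unfolding X_def
      by (simp add: inner_add_left TT1 NT0 TB inner_commute[of "NT u" "TT u"] inner_commute[of "BT u" "TT u"])
    have XNT: "X u \<bullet> NT u = y u" unfolding X_def
      by (simp add: inner_add_left NT1 NT0 TB inner_commute[of "BT u" "NT u"])
    have XBT: "X u \<bullet> BT u = z u" unfolding X_def
      by (simp add: inner_add_left BT1 TB)
    have x0: "x u = 0" using b e XTT by simp
    have yz: "(y u)\<^sup>2 + (z u)\<^sup>2 = 1" using xyz u x0 unfolding J_def by auto
    have zero_deriv: "D = 0" if "((\<lambda>v. f v) has_real_derivative D) (at u)" "\<And>v. v \<in> J \<Longrightarrow> f v = 0" for f D
    proof -
      have "((\<lambda>v. 0::real) has_real_derivative D) (at u)"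
        by (rule has_field_derivative_transform_within_open[OF that(1) Jopen u]) (use that(2) in auto)
      then show ?thesis using DERIV_const DERIV_unique by blast
    qed
    have d1: "((\<lambda>v. X v \<bullet> TT v) has_real_derivative ((\<kappa>\<beta> u *\<^sub>R N\<beta> u) \<bullet> TT u + X u \<bullet> (\<kappa>T u *\<^sub>R NT u))) (at u)"
      using inner_vd b a by blast
    have "(\<kappa>\<beta> u *\<^sub>R N\<beta> u) \<bullet> TT u + X u \<bullet> (\<kappa>T u *\<^sub>R NT u) = 0"
      by (rule zero_deriv[OF d1]) (use Bt ev in auto)
    then have kb: "\<kappa>\<beta> u = - \<kappa>T u * y u" using e TT1 XNT by simp
    have d2: "((\<lambda>v. B\<beta> v \<bullet> TT v) has_real_derivative ((- (\<tau>\<beta> u *\<^sub>R N\<beta> u)) \<bullet> TT u + B\<beta> u \<bullet> (\<kappa>T u *\<^sub>R NT u))) (at u)"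
      using inner_vd b a by blast
    have "(- (\<tau>\<beta> u *\<^sub>R N\<beta> u)) \<bullet> TT u + B\<beta> u \<bullet> (\<kappa>T u *\<^sub>R NT u) = 0"
      by (rule zero_deriv[OF d2]) (use Bt ev dot_cross_self in metis)
    moreover have "B\<beta> u \<bullet> NT u = z u" using b e a XBT triple by metis
    ultimately have tb: "\<tau>\<beta> u = \<kappa>T u * z u" using e TT1 by simp
    have d3: "((\<lambda>v. X v \<bullet> BT v) has_real_derivative ((\<kappa>\<beta> u *\<^sub>R N\<beta> u) \<bullet> BT u + X u \<bullet> (- (\<tau>T u *\<^sub>R NT u)))) (at u)"
      using inner_vd b a by blast
    have d3': "((\<lambda>v. X v \<bullet> BT v) has_real_derivative (- (\<tau>T u * y u))) (at u)"
      using d3 e TB XNT by simp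
    have d4: "((\<lambda>v. X v \<bullet> NT v) has_real_derivative ((\<kappa>\<beta> u *\<^sub>R N\<beta> u) \<bullet> NT u + X u \<bullet> (- (\<kappa>T u *\<^sub>R TT u) + \<tau>T u *\<^sub>R BT u))) (at u)"
      using inner_vd b a by blast
    have d4': "((\<lambda>v. X v \<bullet> NT v) has_real_derivative (\<tau>T u * z u)) (at u)"
      using d4 e NT0 XBT x0 XTT by (simp add: inner_add_right inner_diff_right)
    show ?thesis using x0 XNT XBT yz kb tb d3' d4' by blast
  qed
  have ypos: "y u < 0" if u: "u \<in> J" for u
  proof -
    have "\<kappa>\<beta> u > 0" "\<kappa>T u > 0" using Bt[OF u] A[OF u] by auto
    moreover have "\<kappa>T u * y u < 0" using key[OF u] calculation by linarith
    ultimately show ?thesis by (simp add: mult_less_0_iff)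
  qed
  have part1: "\<exists>\<phi>. \<forall>u\<in>J. (\<phi> has_real_derivative \<tau>T u) (at u) \<and> \<tau>\<beta> u / \<kappa>\<beta> u = - cot (\<phi> u)"
  proof (intro exI[of _ "\<lambda>v. - arccos (X v \<bullet> BT v)"] ballI conjI)
    fix u assume u: "u \<in> J"
    note k = key[OF u]
    have y0: "y u < 0" using ypos[OF u] .
    have kT: "\<kappa>T u > 0" using A[OF u] by blast
    have z2: "(z u)\<^sup>2 < 1" proof -
      have "(y u)\<^sup>2 > 0" using y0 by simp
      then show ?thesis using k by linarith
    qed
    then have "\<bar>z u\<bar> < 1" by (simp add: abs_square_less_1)
    then have zb: "-1 < z u" "z u < 1" by auto
    have sq: "sqrt (1 - (z u)\<^sup>2) = - y u"
    proof -
      have "1 - (z u)\<^sup>2 = (y u)\<^sup>2" using k by simp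
      then show ?thesis using y0 by simp
    qed
    have "((\<lambda>v. arccos (X v \<bullet> BT v)) has_real_derivative
            inverse (- sqrt (1 - (z u)\<^sup>2)) * (- (\<tau>T u * y u))) (at u)"
    proof -
      have dz: "((\<lambda>v. X v \<bullet> BT v) has_real_derivative (- (\<tau>T u * y u))) (at u)" using k by blast
      have da: "(arccos has_real_derivative inverse (- sqrt (1 - (z u)\<^sup>2))) (at (X u \<bullet> BT u))"
        using DERIV_arccos[OF zb] k by simp
      show ?thesis using DERIV_chain2[OF da dz] .
    qed
    then have "((\<lambda>v. - arccos (X v \<bullet> BT v)) has_real_derivative
            - (inverse (- sqrt (1 - (z u)\<^sup>2)) * (- (\<tau>T u * y u)))) (at u)"
      by (rule DERIV_minus)
    moreover have "- (inverse (- sqrt (1 - (z u)\<^sup>2)) * (- (\<tau>T u * y u))) = \<tau>T u"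
      using sq y0 by (simp add: field_simps)
    ultimately show "((\<lambda>v. - arccos (X v \<bullet> BT v)) has_real_derivative \<tau>T u) (at u)" by simp
    have "cot (- arccos (X u \<bullet> BT u)) = z u / y u"
      using k zb sq by (simp add: cot_def cos_arccos sin_arccos)
    then show "\<tau>\<beta> u / \<kappa>\<beta> u = - cot (- arccos (X u \<bullet> BT u))"
      using k kT y0 by (simp add: field_simps)
  qed
  have part2: "\<exists>D. ((\<lambda>v. \<tau>\<beta> v / \<kappa>\<beta> v) has_real_derivative D) (at u)
                 \<and> \<tau>T u / \<kappa>T u
                     = (\<kappa>\<beta> u)\<^sup>2 / ((\<kappa>\<beta> u)\<^sup>2 + (\<tau>\<beta> u)\<^sup>2) powr (3/2) * D" if u: "u \<in> J" for u
  proof -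
    note k = key[OF u]
    have y0: "y u < 0" using ypos[OF u] .
    have kT: "\<kappa>T u > 0" using A[OF u] by blast
    have "((\<lambda>v. (X v \<bullet> BT v) / (X v \<bullet> NT v)) has_real_derivative
       ((- (\<tau>T u * y u)) * (X u \<bullet> NT u) - (X u \<bullet> BT u) * (\<tau>T u * z u)) / ((X u \<bullet> NT u) * (X u \<bullet> NT u))) (at u)"
    proof -
      have dB: "((\<lambda>v. X v \<bullet> BT v) has_real_derivative (- (\<tau>T u * y u))) (at u)" using k by blast
      have dN: "((\<lambda>v. X v \<bullet> NT v) has_real_derivative (\<tau>T u * z u)) (at u)" using k by blast
      have nz: "X u \<bullet> NT u \<noteq> 0" using k y0 by simp
      show ?thesis using DERIV_divide[OF dB dN nz] .
    qed
    then have "((\<lambda>v. - ((X v \<bullet> BT v) / (X v \<bullet> NT v))) has_real_derivative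
       - (((- (\<tau>T u * y u)) * (X u \<bullet> NT u) - (X u \<bullet> BT u) * (\<tau>T u * z u)) / ((X u \<bullet> NT u) * (X u \<bullet> NT u)))) (at u)"
      by (rule DERIV_minus)
    moreover have "- (((- (\<tau>T u * y u)) * (X u \<bullet> NT u) - (X u \<bullet> BT u) * (\<tau>T u * z u)) / ((X u \<bullet> NT u) * (X u \<bullet> NT u)))
       = \<tau>T u / (y u)\<^sup>2"
    proof -
      have "(y u)\<^sup>2 + (z u)\<^sup>2 = 1" using k by blast
      then show ?thesis using k y0 by (simp add: field_simps power2_eq_square) (metis distrib_left mult.commute mult_1_right)
    qed
    ultimately have d: "((\<lambda>v. - ((X v \<bullet> BT v) / (X v \<bullet> NT v))) has_real_derivative \<tau>T u / (y u)\<^sup>2) (at u)"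
      by simp
    have d2: "((\<lambda>v. \<tau>\<beta> v / \<kappa>\<beta> v) has_real_derivative \<tau>T u / (y u)\<^sup>2) (at u)"
    proof (rule has_field_derivative_transform_within_open[OF d Jopen u])
      fix v assume v: "v \<in> J"
      note kv = key[OF v]
      have "\<kappa>T v > 0" using A[OF v] by blast
      then show "- ((X v \<bullet> BT v) / (X v \<bullet> NT v)) = \<tau>\<beta> v / \<kappa>\<beta> v" using kv by simp
    qed
    have sum: "(\<kappa>\<beta> u)\<^sup>2 + (\<tau>\<beta> u)\<^sup>2 = (\<kappa>T u)\<^sup>2"
    proof -
      have yz: "(y u)\<^sup>2 + (z u)\<^sup>2 = 1" using k by blast
      have "(\<kappa>\<beta> u)\<^sup>2 + (\<tau>\<beta> u)\<^sup>2 = (\<kappa>T u)\<^sup>2 * (y u)\<^sup>2 + (\<kappa>T u)\<^sup>2 * (z u)\<^sup>2"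
        using k by (simp add: power_mult_distrib)
      also have "\<dots> = (\<kappa>T u)\<^sup>2 * ((y u)\<^sup>2 + (z u)\<^sup>2)" by (simp only: distrib_left)
      also have "\<dots> = (\<kappa>T u)\<^sup>2" using yz by simp
      finally show ?thesis .
    qed
    have pw: "((\<kappa>T u)\<^sup>2) powr (3/2) = (\<kappa>T u) ^ 3"
    proof -
      have "((\<kappa>T u)\<^sup>2) powr (3/2) = ((\<kappa>T u) powr 2) powr (3/2)"
        using kT by (simp add: powr_realpow)
      also have "\<dots> = (\<kappa>T u) powr 3" by (simp add: powr_powr)
      also have "\<dots> = (\<kappa>T u) ^ 3" using powr_realpow[of "\<kappa>T u" 3] kT by simp
      finally show ?thesis .
    qed
    show ?thesis
    proof (intro exI conjI, rule d2)
      show "\<tau>T u / \<kappa>T u = (\<kappa>\<beta> u)\<^sup>2 / ((\<kappa>\<beta> u)\<^sup>2 + (\<tau>\<beta> u)\<^sup>2) powr (3/2) * (\<tau>T u / (y u)\<^sup>2)"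
        unfolding sum pw using k kT y0 by (simp add: field_simps power2_eq_square power3_eq_cube)
    qed
  qed
  show ?thesis using part1 part2 unfolding J_def by blast
qed

end
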